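(* Let $U$ be a Hilbert space, $H: U\rightrightarrows U$, and for each $i\in\mathbb{N}$ let $W_{i+1}, M_{i+1}, Z_{i+1}, P_{i+1}\in\mathcal{L}(U;U)$ with $Z_{i+1}M_{i+1}$ self-adjoint, positive definite and invertible, and with $Z_{i+2}M_{i+2}\ge Z_{i+1}P_{i+1}$. Let $(u^i)_{i\in\mathbb{N}}$ satisfy $0\in W_{i+1}H(u^{i+1}) + M_{i+1}(u^{i+1}-u^i)$ for all $i$. Let $\delta\in[0,1]$ and $N_{i+1}:=\delta W_{i+1}^*Z_{i+1}^*(Z_{i+1}M_{i+1})^{-1}Z_{i+1}W_{i+1}$. Suppose $H$ is $(Z_{i+1}P_{i+1}, N_{i+1}, Z_{i+2}M_{i+2})$-partially subregular at some $(\hat u,0)$ with $\hat u\in H^{-1}(0)$, in a neighbourhood $\mathcal{U}$ containing $\{u^j\}_{j=0}^\infty$. Then \[ \delta\|u^{i+1}-u^i\|^2_{Z_{i+1}M_{i+1}} + \operatorname{dist}^2_{Z_{i+2}M_{i+2}-Z_{i+1}P_{i+1}}(u^{i+1},H^{-1}(0)) \ge \operatorname{dist}^2_{Z_{i+2}M_{i+2}}(u^{i+1},H^{-1}(0)). \]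
   Context: For $T\in\mathcal{L}(U;U)$: $\|x\|_T^2:=\langle Tx,x\rangle$, $\operatorname{dist}_T^2(z,A):=\inf_{u\in A}\|z-u\|_T^2$ (with $\inf\emptyset=+\infty$); $T\ge S$ means $T-S$ positive semidefinite. Definition (partial subregularity): for Hilbert spaces $U,W$, $M,P\in\mathcal{L}(U;U)$ and $N\in\mathcal{L}(W;W)$ with $N\ge0$, $M\ge0$, $M\ge P$, a map $T:U\rightrightarrows W$ is $(P,N,M)$-partially subregular at $(\hat u,\hat w)\in\operatorname{graph}T$ if there is a neighbourhood $\mathcal{U}\ni\hat u$ with \[ \operatorname{dist}^2_N(\hat w, T(u)) + \operatorname{dist}^2_{M-P}(u, T^{-1}(\hat w)) \ge \operatorname{dist}^2_M(u,T^{-1}(\hat w)) \quad (u\in\mathcal{U}). \] *)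

theory Defs
  imports "HOL-Analysis.Analysis"
begin

text \<open>Real Hilbert space: type class real_inner + complete_space.
  Operators in L(U;U): functions with bounded_linear.
  Set-valued maps U =>=> W: functions into sets.\<close>

definition sqnorm_op :: "('a::real_inner \<Rightarrow> 'a) \<Rightarrow> 'a \<Rightarrow> real" where
  "sqnorm_op T x = T x \<bullet> x"

definition distsq_op :: "('a::real_inner \<Rightarrow> 'a) \<Rightarrow> 'a \<Rightarrow> 'a set \<Rightarrow> ereal" where
  "distsq_op T z A = (INF u\<in>A. ereal (sqnorm_op T (z - u)))"

definition psd_le :: "('a::real_inner \<Rightarrow> 'a) \<Rightarrow> ('a \<Rightarrow> 'a) \<Rightarrow> bool" where
  "psd_le S T \<longleftrightarrow> (\<forall>x. 0 \<le> sqnorm_op (\<lambda>y. T y - S y) x)"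

definition self_adjoint_op :: "('a::real_inner \<Rightarrow> 'a) \<Rightarrow> bool" where
  "self_adjoint_op T \<longleftrightarrow> (\<forall>x y. T x \<bullet> y = x \<bullet> T y)"

definition pos_def_op :: "('a::real_inner \<Rightarrow> 'a) \<Rightarrow> bool" where
  "pos_def_op T \<longleftrightarrow> (\<forall>x. x \<noteq> 0 \<longrightarrow> 0 < sqnorm_op T x)"

definition invertible_op :: "('a::real_normed_vector \<Rightarrow> 'a) \<Rightarrow> bool" where
  "invertible_op T \<longleftrightarrow> bounded_linear T \<and> bij T \<and> bounded_linear (inv T)"

definition inv_setmap :: "('a \<Rightarrow> 'b set) \<Rightarrow> 'b \<Rightarrow> 'a set" where
  "inv_setmap T w = {u. w \<in> T u}"

definition partially_subregular_on ::
  "('a::real_inner \<Rightarrow> 'a) \<Rightarrow> ('b::real_inner \<Rightarrow> 'b) \<Rightarrow> ('a \<Rightarrow> 'a) \<Rightarrow>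
   ('a \<Rightarrow> 'b set) \<Rightarrow> 'a \<Rightarrow> 'b \<Rightarrow> 'a set \<Rightarrow> bool" where
  "partially_subregular_on P N M T uh wh Nb \<longleftrightarrow>
     bounded_linear P \<and> bounded_linear N \<and> bounded_linear M \<and>
     psd_le (\<lambda>_. 0) N \<and> psd_le (\<lambda>_. 0) M \<and> psd_le P M \<and>
     wh \<in> T uh \<and> open Nb \<and> uh \<in> Nb \<and>
     (\<forall>u\<in>Nb. distsq_op N wh (T u) + distsq_op (\<lambda>x. M x - P x) u (inv_setmap T wh)
                \<ge> distsq_op M u (inv_setmap T wh))"

definition partially_subregular ::
  "('a::real_inner \<Rightarrow> 'a) \<Rightarrow> ('b::real_inner \<Rightarrow> 'b) \<Rightarrow> ('a \<Rightarrow> 'a) \<Rightarrow>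
   ('a \<Rightarrow> 'b set) \<Rightarrow> 'a \<Rightarrow> 'b \<Rightarrow> bool" where
  "partially_subregular P N M T uh wh \<longleftrightarrow> (\<exists>Nb. partially_subregular_on P N M T uh wh Nb)"

end

theory Submission
  imports Defs
begin

lemma riesz_aux:
  fixes \<phi> :: "'a::{real_inner, complete_space} \<Rightarrow> real"
  assumes bl: "bounded_linear \<phi>" and ne: "\<phi> a = 1"
  shows "\<exists>x0. \<phi> x0 = 1 \<and> (\<forall>x. \<phi> x = 1 \<longrightarrow> norm x0 \<le> norm x)"
proof -
  interpret bounded_linear \<phi> by fact
  define A where "A = {x. \<phi> x = 1}"
  define d where "d = Inf (norm ` A)"
  have aA: "a \<in> A" using ne by (simp add: A_def)
  have bdd: "bdd_below (norm ` A)" by (rule bdd_belowI[of _ 0]) auto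
  have dle: "d \<le> norm x" if "x \<in> A" for x
    unfolding d_def using bdd that by (simp add: cInf_lower)
  have d0: "0 \<le> d" unfolding d_def using aA
    by (intro cInf_greatest) auto
  have ex: "\<exists>x\<in>A. norm x ^ 2 < d ^ 2 + 1 / real (Suc n)" for n
  proof -
    have "sqrt (d^2 + 1 / real (Suc n)) > d"
      using d0 by (simp add: real_less_rsqrt)
    then have "Inf (norm ` A) < sqrt (d^2 + 1 / real (Suc n))" by (simp add: d_def)
    then have "\<exists>y\<in>norm ` A. y < sqrt (d^2 + 1 / real (Suc n))"
      by (intro cInf_lessD) (use aA in auto)
    then obtain y where "y \<in> norm ` A" "y < sqrt (d^2 + 1 / real (Suc n))" by blast
    then obtain x where x: "x \<in> A" "norm x < sqrt (d^2 + 1 / real (Suc n))" by auto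
    have "norm x ^ 2 < (sqrt (d^2 + 1 / real (Suc n)))^2"
      using x(2) by (intro power_strict_mono) auto
    also have "\<dots> = d^2 + 1 / real (Suc n)" by (simp add: add_nonneg_nonneg)
    finally show ?thesis using x by auto
  qed
  then obtain s where s: "\<And>n. s n \<in> A" "\<And>n. norm (s n) ^ 2 < d ^ 2 + 1 / real (Suc n)"
    by metis
  have midA: "(1/2) *\<^sub>R (x + y) \<in> A" if "x \<in> A" "y \<in> A" for x y
    using that by (simp add: A_def scale add)
  have par: "norm (x - y) ^ 2 = 2 * norm x ^ 2 + 2 * norm y ^ 2 - 4 * norm ((1/2) *\<^sub>R (x + y)) ^ 2"
    for x y :: 'a
    by (simp add: power2_norm_eq_inner inner_diff inner_add inner_commute algebra_simps)
  have cb: "norm (s m - s n) ^ 2 \<le> 2 / real (Suc m) + 2 / real (Suc n)" for m n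
  proof -
    have "d ^ 2 \<le> norm ((1/2) *\<^sub>R (s m + s n)) ^ 2"
      using dle[OF midA[OF s(1) s(1)]] d0 by (intro power_mono) auto
    then show ?thesis using par[of "s m" "s n"] s(2)[of m] s(2)[of n] by linarith
  qed
  have "Cauchy s"
  proof (rule metric_CauchyI)
    fix e :: real assume e: "e > 0"
    obtain K :: nat where K: "4 / e^2 < real K" using reals_Archimedean2 by blast
    show "\<exists>K. \<forall>m\<ge>K. \<forall>n\<ge>K. dist (s m) (s n) < e"
    proof (intro exI allI impI)
      fix m n assume mn: "K \<le> m" "K \<le> n"
      have e2: "4 / e^2 < real (Suc m)" "4 / e^2 < real (Suc n)" using K mn by linarith+
      have "2 / real (Suc m) < e^2 / 2"
        using e2(1) e by (simp add: field_simps)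
      moreover have "2 / real (Suc n) < e^2 / 2"
        using e2(2) e by (simp add: field_simps)
      ultimately have "norm (s m - s n) ^ 2 < e ^ 2" using cb[of m n] by linarith
      then have "norm (s m - s n) < e" by (rule power_less_imp_less_base[of _ 2]) (use e in auto)
      then show "dist (s m) (s n) < e" by (simp add: dist_norm)
    qed
  qed
  then obtain x0 where lim: "s \<longlonglongrightarrow> x0" using convergent_eq_Cauchy by blast
  have "(\<lambda>n. \<phi> (s n)) \<longlonglongrightarrow> \<phi> x0" using lim by (intro tendsto)
  moreover have "(\<lambda>n. \<phi> (s n)) = (\<lambda>n. 1)" using s(1) by (auto simp: A_def)
  ultimately have "(\<lambda>n. 1::real) \<longlonglongrightarrow> \<phi> x0" by simp
  then have p1: "\<phi> x0 = 1" using LIMSEQ_unique[OF _ tendsto_const] by metis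
  have nl: "(\<lambda>n. norm (s n) ^ 2) \<longlonglongrightarrow> norm x0 ^ 2" using lim by (intro tendsto_intros)
  have ul: "(\<lambda>n. d ^ 2 + 1 / real (Suc n)) \<longlonglongrightarrow> d ^ 2 + 0"
    by (intro tendsto_intros LIMSEQ_inverse_real_of_nat[unfolded inverse_eq_divide])
  have "norm x0 ^ 2 \<le> d ^ 2 + 0"
    using nl ul by (rule LIMSEQ_le) (use s(2) less_imp_le in auto)
  then have "norm x0 \<le> d" using d0 by (simp add: power2_le_iff_abs_le)
  then show ?thesis using p1 dle by (auto simp: A_def intro: order_trans)
qed

lemma riesz:
  fixes \<phi> :: "'a::{real_inner, complete_space} \<Rightarrow> real"
  assumes bl: "bounded_linear \<phi>"
  shows "\<exists>y. \<forall>x. \<phi> x = x \<bullet> y"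
proof (cases "\<forall>x. \<phi> x = 0")
  case True then show ?thesis by (intro exI[of _ 0]) auto
next
  case False
  interpret bounded_linear \<phi> by fact
  from False obtain b where b: "\<phi> b \<noteq> 0" by auto
  have "\<phi> ((1 / \<phi> b) *\<^sub>R b) = 1" using b by (simp add: scale)
  from riesz_aux[OF bl this] obtain x0 where x0: "\<phi> x0 = 1" "\<And>x. \<phi> x = 1 \<Longrightarrow> norm x0 \<le> norm x"
    by blast
  have x0nz: "x0 \<noteq> 0" using x0 zero by auto
  have orth: "x0 \<bullet> k = 0" if "\<phi> k = 0" for k
  proof -
    have q: "0 \<le> 2 * t * (x0 \<bullet> k) + t^2 * (k \<bullet> k)" for t
    proof -
      have "\<phi> (x0 + t *\<^sub>R k) = 1" using x0 that by (simp add: add scale)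
      then have "norm x0 \<le> norm (x0 + t *\<^sub>R k)" by (rule x0(2))
      then have "norm x0 ^ 2 \<le> norm (x0 + t *\<^sub>R k) ^ 2" by (intro power_mono) auto
      moreover have "norm (x0 + t *\<^sub>R k) ^ 2 = norm x0 ^ 2 + (2 * t * (x0 \<bullet> k) + t^2 * (k \<bullet> k))"
        unfolding power2_norm_eq_inner
        by (simp add: inner_add_left inner_add_right inner_commute algebra_simps power2_eq_square)
      ultimately show ?thesis by linarith
    qed
    show ?thesis
    proof (rule ccontr)
      assume ne: "x0 \<bullet> k \<noteq> 0"
      then have kk: "k \<bullet> k > 0" using that
        by (metis inner_gt_zero_iff inner_zero_right)
      define t where "t = - (x0 \<bullet> k) / (k \<bullet> k)"
      have "2 * t * (x0 \<bullet> k) + t^2 * (k \<bullet> k) = - ((x0 \<bullet> k)^2) / (k \<bullet> k)"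
        unfolding t_def using kk by (simp add: power2_eq_square divide_simps)
      also have "\<dots> < 0" using ne kk by (simp add: divide_pos_pos)
      finally show False using q[of t] by linarith
    qed
  qed
  define y where "y = (1 / (x0 \<bullet> x0)) *\<^sub>R x0"
  have "\<phi> x = x \<bullet> y" for x
  proof -
    have "\<phi> (x - \<phi> x *\<^sub>R x0) = 0" using x0 by (simp add: diff scale)
    then have "x0 \<bullet> (x - \<phi> x *\<^sub>R x0) = 0" by (rule orth)
    then have "x0 \<bullet> x = \<phi> x * (x0 \<bullet> x0)" by (simp add: inner_diff_right)
    then show ?thesis using x0nz by (simp add: y_def inner_commute field_simps)
  qed
  then show ?thesis by blast
qed

lemma adjoint_hilbert:
  fixes f :: "'a::{real_inner, complete_space} \<Rightarrow> 'a"
  assumes bl: "bounded_linear f"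
  shows "adjoint f y \<bullet> x = y \<bullet> f x"
proof -
  have "\<forall>y. \<exists>w. \<forall>x. f x \<bullet> y = x \<bullet> w"
  proof
    fix y
    have "bounded_linear (\<lambda>x. f x \<bullet> y)"
      using bl by (intro bounded_linear_inner_left_comp)
    then show "\<exists>w. \<forall>x. f x \<bullet> y = x \<bullet> w" by (rule riesz)
  qed
  then have "\<exists>f'. \<forall>x y. f x \<bullet> y = x \<bullet> f' y" by (rule choice[THEN exE]) blast
  then have "\<forall>x y. f x \<bullet> y = x \<bullet> adjoint f y"
    unfolding adjoint_def by (rule someI_ex)
  then show ?thesis by (metis inner_commute)
qed

theorem proposition3p14:
  fixes H :: "'a::{real_inner, complete_space} \<Rightarrow> 'a set"
    and W M Z P :: "nat \<Rightarrow> 'a \<Rightarrow> 'a"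
    and u :: "nat \<Rightarrow> 'a"
    and \<delta> :: real and uh :: 'a
  assumes ops: "\<And>i. bounded_linear (W (i+1)) \<and> bounded_linear (M (i+1)) \<and>
                    bounded_linear (Z (i+1)) \<and> bounded_linear (P (i+1))"
    and ZM_sa: "\<And>i. self_adjoint_op (Z (i+1) \<circ> M (i+1))"
    and ZM_pd: "\<And>i. pos_def_op (Z (i+1) \<circ> M (i+1))"
    and ZM_inv: "\<And>i. invertible_op (Z (i+1) \<circ> M (i+1))"
    and ZM_ge: "\<And>i. psd_le (Z (i+1) \<circ> P (i+1)) (Z (i+2) \<circ> M (i+2))"
    and iter: "\<And>i. 0 \<in> {W (i+1) h + M (i+1) (u (i+1) - u i) | h. h \<in> H (u (i+1))}"
    and \<delta>: "0 \<le> \<delta>" "\<delta> \<le> 1"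
    and N_def: "\<And>i. N (i+1) = (\<lambda>x. \<delta> *\<^sub>R (adjoint (W (i+1)) \<circ> adjoint (Z (i+1))
                    \<circ> inv (Z (i+1) \<circ> M (i+1)) \<circ> Z (i+1) \<circ> W (i+1)) x)"
    and uh: "uh \<in> inv_setmap H 0"
    and subreg: "\<And>i. \<exists>Nb. range u \<subseteq> Nb \<and>
                    partially_subregular_on (Z (i+1) \<circ> P (i+1)) (N (i+1)) (Z (i+2) \<circ> M (i+2))
                      H uh 0 Nb"
  shows "\<forall>i. ereal (\<delta> * sqnorm_op (Z (i+1) \<circ> M (i+1)) (u (i+1) - u i))
            + distsq_op (\<lambda>x. (Z (i+2) \<circ> M (i+2)) x - (Z (i+1) \<circ> P (i+1)) x) (u (i+1)) (inv_setmap H 0)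
          \<ge> distsq_op (Z (i+2) \<circ> M (i+2)) (u (i+1)) (inv_setmap H 0)"
proof
  fix i
  let ?A = "Z (i+1) \<circ> M (i+1)"
  define d where "d = u (i+1) - u i"
  from subreg[of i] obtain Nb where Nb: "range u \<subseteq> Nb"
    "partially_subregular_on (Z (i+1) \<circ> P (i+1)) (N (i+1)) (Z (i+2) \<circ> M (i+2)) H uh 0 Nb"
    by blast
  have ineq: "distsq_op (N (i+1)) 0 (H (u (i+1)))
      + distsq_op (\<lambda>x. (Z (i+2) \<circ> M (i+2)) x - (Z (i+1) \<circ> P (i+1)) x) (u (i+1)) (inv_setmap H 0)
      \<ge> distsq_op (Z (i+2) \<circ> M (i+2)) (u (i+1)) (inv_setmap H 0)"
    using Nb unfolding partially_subregular_on_def by blast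
  from iter[of i] obtain h where h: "h \<in> H (u (i+1))" "0 = W (i+1) h + M (i+1) d"
    unfolding d_def by blast
  have blW: "bounded_linear (W (i+1))" and blM: "bounded_linear (M (i+1))"
    and blZ: "bounded_linear (Z (i+1))" using ops[of i] by auto
  have Wh: "W (i+1) (- h) = M (i+1) d"
    using h(2) linear_neg[OF bounded_linear.linear[OF blW]]
    by (metis add_eq_0_iff neg_equal_iff_equal)
  have injA: "inj ?A" using ZM_inv[of i] unfolding invertible_op_def bij_def by blast
  have invA: "inv ?A (?A d) = d" using inv_f_f[OF injA, of d] by simp
  have invA': "inv ?A (Z (i+1) (M (i+1) d)) = d" using invA by simp
  have "sqnorm_op (N (i+1)) (0 - h) = \<delta> * sqnorm_op ?A d"
  proof -
    have "sqnorm_op (N (i+1)) (0 - h)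
      = \<delta> * (adjoint (W (i+1)) (adjoint (Z (i+1)) (inv ?A (Z (i+1) (W (i+1) (- h))))) \<bullet> (- h))"
      unfolding sqnorm_op_def N_def by simp
    also have "\<dots> = \<delta> * (adjoint (Z (i+1)) d \<bullet> M (i+1) d)"
      unfolding Wh comp_def[symmetric, of "Z (i+1)" "M (i+1)"] invA
      by (simp only: adjoint_hilbert[OF blW] Wh invA')
    also have "\<dots> = \<delta> * (d \<bullet> Z (i+1) (M (i+1) d))"
      by (simp only: adjoint_hilbert[OF blZ])
    also have "\<dots> = \<delta> * sqnorm_op ?A d"
      by (simp add: sqnorm_op_def inner_commute)
    finally show ?thesis .
  qed
  then have "distsq_op (N (i+1)) 0 (H (u (i+1))) \<le> ereal (\<delta> * sqnorm_op ?A d)"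
    unfolding distsq_op_def using h(1) by (metis INF_lower)
  then show "ereal (\<delta> * sqnorm_op (Z (i+1) \<circ> M (i+1)) (u (i+1) - u i))
            + distsq_op (\<lambda>x. (Z (i+2) \<circ> M (i+2)) x - (Z (i+1) \<circ> P (i+1)) x) (u (i+1)) (inv_setmap H 0)
          \<ge> distsq_op (Z (i+2) \<circ> M (i+2)) (u (i+1)) (inv_setmap H 0)"
    using ineq unfolding d_def by (meson add_right_mono order_trans)
qed

end
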